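(* Let $p$ be a prime and let $r,\alpha,\gamma$ be positive integers with $\alpha>1$ and $p\nmid\gamma$. If $p^{\alpha}\gamma\in F_r$, then $p^{\alpha-1}\gamma\in F_r$.
   Context: For a positive integer $r$, $S_r$ is the multiplicative arithmetic function with $S_r(q^{\beta})=0$ if $q\leq r$ and $S_r(q^{\beta})=q^{\beta-1}(q-r)$ if $q>r$, for all primes $q$ and positive integers $\beta$. $B_r=\{n\in\mathbb{N}: S_r(n)>0\}$ (positive integers whose smallest prime factor exceeds $r$, together with $1$). $F_r$ is the set of $n\in B_r$ such that $S_r(n)<S_r(m)$ for all $m\in B_r$ with $m>n$. *)

theory Defs
  imports "HOL-Computational_Algebra.Primes"
begin

text \<open>S_r(0) is set to 0 (0 is not a positive integer, and we keep it out of B_r).\<close>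
definition S :: "nat \<Rightarrow> nat \<Rightarrow> int" where
  "S r n = (if n = 0 then 0 else
     (\<Prod>q\<in>prime_factors n.
        (if q \<le> r then 0 else int q ^ (multiplicity q n - 1) * (int q - int r))))"

definition B :: "nat \<Rightarrow> nat set" where
  "B r = {n. n > 0 \<and> S r n > 0}"

definition F :: "nat \<Rightarrow> nat set" where
  "F r = {n \<in> B r. \<forall>m \<in> B r. m > n \<longrightarrow> S r n < S r m}"

end

theory Submission
  imports Defs
begin

lemma mult_pm:
  fixes p q m :: nat
  assumes "prime p" "prime q" "m > 0"
  shows "multiplicity q (p*m) = multiplicity q m + (if q = p then 1 else 0)"
proof -
  have "multiplicity q (p*m) = multiplicity q p + multiplicity q m"
    using assms by (intro prime_elem_multiplicity_mult_distrib) (auto)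
  moreover have "multiplicity q p = (if q = p then 1 else 0)"
    using assms by (auto simp: multiplicity_self prime_multiplicity_other)
  ultimately show ?thesis by simp
qed

lemma pf_pm:
  fixes p m :: nat
  assumes "prime p" "m > 0"
  shows "prime_factors (p*m) = insert p (prime_factors m)"
proof -
  have "q = p" if "prime q" "q dvd p" for q
    using that assms(1) by (metis prime_nat_iff prime_gt_1_nat less_irrefl)
  thus ?thesis using assms by (auto simp: in_prime_factors_iff prime_dvd_mult_iff)
qed

lemma S_pm:
  fixes p m r :: nat
  assumes "prime p" "m > 0"
  shows "S r (p*m) = (if p dvd m then int p * S r m
            else (if p \<le> r then 0 else int p - int r) * S r m)"
proof -
  define g where "g q k = (if q \<le> r then 0 else int q ^ (k - 1) * (int q - int r))" for q k :: nat
  have Sdef: "S r n = (\<Prod>q\<in>prime_factors n. g q (multiplicity q n))" if "n > 0" for n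
    using that by (simp add: S_def g_def)
  have pm0: "p*m > 0" using assms prime_gt_0_nat by auto
  have fin: "finite (prime_factors m)" by simp
  have eq: "(\<Prod>q\<in>prime_factors m - {p}. g q (multiplicity q (p*m)))
          = (\<Prod>q\<in>prime_factors m - {p}. g q (multiplicity q m))"
  proof (rule prod.cong)
    fix x assume "x \<in> prime_factors m - {p}"
    hence "prime x" "x \<noteq> p" by auto
    thus "g x (multiplicity x (p*m)) = g x (multiplicity x m)"
      using mult_pm[OF assms(1) _ assms(2), of x] by simp
  qed simp
  show ?thesis
  proof (cases "p dvd m")
    case True
    hence pin: "p \<in> prime_factors m" using assms by (auto simp: in_prime_factors_iff)
    have k: "multiplicity p m \<ge> 1" using True assms
      by (metis One_nat_def Suc_leI not_prime_unit prime_multiplicity_gt_zero_iff prime_imp_prime_elem neq0_conv)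
    have "S r (p*m) = (\<Prod>q\<in>prime_factors m. g q (multiplicity q (p*m)))"
      using Sdef[OF pm0] pf_pm[OF assms] pin by (simp add: insert_absorb)
    also have "\<dots> = g p (multiplicity p (p*m)) * (\<Prod>q\<in>prime_factors m - {p}. g q (multiplicity q (p*m)))"
      using pin fin by (simp add: prod.remove)
    also have "\<dots> = g p (multiplicity p m + 1) * (\<Prod>q\<in>prime_factors m - {p}. g q (multiplicity q m))"
      using eq mult_pm[OF assms(1) assms(1) assms(2)] by simp
    also have "g p (multiplicity p m + 1) = int p * g p (multiplicity p m)"
      using k unfolding g_def
      by (cases "multiplicity p m") (auto simp: algebra_simps)
    also have "S r m = g p (multiplicity p m) * (\<Prod>q\<in>prime_factors m - {p}. g q (multiplicity q m))"
      using Sdef[OF assms(2)] pin fin by (simp add: prod.remove)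
    ultimately show ?thesis using True by (simp add: algebra_simps)
  next
    case False
    hence pin: "p \<notin> prime_factors m" by auto
    have "S r (p*m) = g p (multiplicity p (p*m)) * (\<Prod>q\<in>prime_factors m. g q (multiplicity q (p*m)))"
      using Sdef[OF pm0] pf_pm[OF assms] pin fin by simp
    also have "\<dots> = g p 1 * (\<Prod>q\<in>prime_factors m. g q (multiplicity q m))"
      using eq pin mult_pm[OF assms(1) assms(1) assms(2)] False assms
      by (simp add: not_dvd_imp_multiplicity_0)
    also have "\<dots> = (if p \<le> r then 0 else int p - int r) * S r m"
      using Sdef[OF assms(2)] by (simp add: g_def)
    finally show ?thesis using False by simp
  qed
qed

theorem lemma3p2:
  fixes p r \<alpha> \<gamma> :: nat
  assumes "prime p" and "r > 0" and "\<alpha> > 1" and "\<gamma> > 0" and "\<not> p dvd \<gamma>"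
    and "p ^ \<alpha> * \<gamma> \<in> F r"
  shows "p ^ (\<alpha> - 1) * \<gamma> \<in> F r"
proof -
  define n' where "n' = p ^ (\<alpha> - 1) * \<gamma>"
  have p0: "p > 0" using assms(1) prime_gt_0_nat by auto
  have n'0: "n' > 0" using p0 assms(4) by (simp add: n'_def)
  have nn: "p ^ \<alpha> * \<gamma> = p * n'" using assms(3) unfolding n'_def
    by (metis Suc_diff_1 less_trans mult.assoc power_Suc zero_less_one)
  have pd: "p dvd n'" using assms(3) unfolding n'_def by (simp add: dvd_mult2)
  have Sn: "S r (p*n') = int p * S r n'" using S_pm[OF assms(1) n'0] pd by simp
  have nF: "p * n' \<in> F r" using assms(6) nn by simp
  hence Spos: "S r (p*n') > 0" by (simp add: F_def B_def)
  hence Sn'pos: "S r n' > 0" using Sn p0 by (simp add: zero_less_mult_iff)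
  have pr: "p > r"
  proof (rule ccontr)
    assume "\<not> p > r"
    have "p \<in> prime_factors (p*n')" using assms(1) n'0 p0 by (auto simp: in_prime_factors_iff)
    moreover have "p*n' \<noteq> 0" using n'0 p0 by simp
    ultimately have "S r (p*n') = 0" using \<open>\<not> p > r\<close> unfolding S_def
      by (simp only: if_False) (rule prod_zero, auto intro!: bexI[of _ p])
    thus False using Spos by simp
  qed
  have "n' \<in> B r" using n'0 Sn'pos by (simp add: B_def)
  moreover have "S r n' < S r m" if "m \<in> B r" "m > n'" for m
  proof (rule ccontr)
    assume "\<not> S r n' < S r m"
    hence le: "S r m \<le> S r n'" by simp
    have m0: "m > 0" and Sm: "S r m > 0" using that(1) by (auto simp: B_def)
    have "S r (p*m) \<le> int p * S r m \<and> S r (p*m) > 0"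
      using S_pm[OF assms(1) m0] pr Sm by (auto simp: mult_right_mono)
    moreover have "int p * S r m \<le> int p * S r n'" using le by (simp add: mult_left_mono)
    moreover have "p*m > p*n'" using that(2) p0 by simp
    moreover have "p*m \<in> B r" using calculation(1) m0 p0 by (simp add: B_def)
    ultimately show False using nF Sn unfolding F_def
      by (smt (verit, best) mem_Collect_eq)
  qed
  ultimately show ?thesis unfolding F_def n'_def[symmetric] by blast
qed

end
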